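(* Let $p$ be an odd prime. Then the edge set of the complete graph $K_{p^2}$ can be partitioned into $(p^2-1)/4$ subgraphs, each isomorphic to $C_p \square C_p$.
   Context: $C_n$ denotes the cycle graph on $n$ vertices and $K_m$ the complete graph on $m$ vertices. For graphs $G=(V,E)$ and $G'=(V',E')$, the Cartesian product $G \square G'$ has vertex set $V\times V'$, with $\{(v,v'),(w,w')\}$ an edge iff either $\{v,w\}\in E$ and $v'=w'$, or $v=w$ and $\{v',w'\}\in E'$. Partitioning $K_m$ into copies of $G$ means decomposing its edge set into edge-disjoint subgraphs (on the vertex set of $K_m$) each isomorphic to $G$. *)

theory Defs
  imports Main "HOL-Computational_Algebra.Primes"
begin

type_synonym 'a graph = "'a set \<times> 'a set set"

definition verts :: "'a graph \<Rightarrow> 'a set" where "verts G = fst G"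
definition edges :: "'a graph \<Rightarrow> 'a set set" where "edges G = snd G"

text \<open>Cycle graph C_n on vertices 0..n-1 (meaningful for n >= 3).\<close>
definition cycle_graph :: "nat \<Rightarrow> nat graph" where
  "cycle_graph n = ({..<n}, {{i, Suc i mod n} | i. i < n})"

definition complete_graph :: "nat \<Rightarrow> nat graph" where
  "complete_graph m = ({..<m}, {{u, v} | u v. u < m \<and> v < m \<and> u \<noteq> v})"

definition cart_prod :: "'a graph \<Rightarrow> 'b graph \<Rightarrow> ('a \<times> 'b) graph" where
  "cart_prod G H = (verts G \<times> verts H,
     {{(v, v'), (w, v')} | v w v'. {v, w} \<in> edges G \<and> v' \<in> verts H}
     \<union> {{(v, v'), (v, w')} | v v' w'. v \<in> verts G \<and> {v', w'} \<in> edges H})"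

definition graph_iso :: "'a graph \<Rightarrow> 'b graph \<Rightarrow> bool" where
  "graph_iso G H \<longleftrightarrow> (\<exists>f. bij_betw f (verts G) (verts H) \<and>
                          (\<lambda>e. f ` e) ` edges G = edges H)"

definition edge_partition_into :: "'a graph \<Rightarrow> 'b graph \<Rightarrow> nat \<Rightarrow> bool" where
  "edge_partition_into K G k \<longleftrightarrow>
     (\<exists>H :: nat \<Rightarrow> 'a graph.
        (\<forall>i<k. verts (H i) \<subseteq> verts K \<and> edges (H i) \<subseteq> edges K \<and> graph_iso (H i) G) \<and>
        (\<forall>i<k. \<forall>j<k. i \<noteq> j \<longrightarrow> edges (H i) \<inter> edges (H j) = {}) \<and>
        (\<Union>i<k. edges (H i)) = edges K)"

end

theory Submission
  imports Defs "HOL-Number_Theory.Cong"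
begin

lemma edgesG:
  "edges (cart_prod (cycle_graph p) (cycle_graph p)) =
     {{(a,b),(Suc a mod p, b)} | a b. a<p \<and> b<p} \<union> {{(a,b),(a, Suc b mod p)} | a b. a<p \<and> b<p}"
proof -
  have 1: "{v, w} \<in> edges (cycle_graph p) \<longleftrightarrow> (\<exists>i<p. (v = i \<and> w = Suc i mod p) \<or> (w = i \<and> v = Suc i mod p))" for v w
    unfolding cycle_graph_def edges_def by (auto simp: doubleton_eq_iff)
  have V: "verts (cycle_graph p) = {..<p}" by (simp add: cycle_graph_def verts_def)
  have A: "{{(v, v'), (w, v')} |v w v'. {v, w} \<in> edges (cycle_graph p) \<and> v' \<in> verts (cycle_graph p)}
     = {{(a,b),(Suc a mod p, b)} | a b. a<p \<and> b<p}"
    unfolding 1 V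
    apply (rule set_eqI) apply (rule iffI)
     apply (elim CollectE exE conjE disjE) apply (auto simp: insert_commute)[2]
    apply blast
    done
  have B: "{{(v, v'), (v, w')} |v v' w'. v \<in> verts (cycle_graph p) \<and> {v', w'} \<in> edges (cycle_graph p)}
     = {{(a,b),(a, Suc b mod p)} | a b. a<p \<and> b<p}"
    unfolding 1 V
    apply (rule set_eqI) apply (rule iffI)
     apply (elim CollectE exE conjE disjE) apply (auto simp: insert_commute)[2]
    apply blast
    done
  show ?thesis
    unfolding cart_prod_def edges_def[of "(_,_)"] snd_conv using A B by (simp add: edges_def)
qed

lemma vertsG: "verts (cart_prod (cycle_graph p) (cycle_graph p)) = {..<p} \<times> {..<p}"
  by (simp add: cart_prod_def verts_def cycle_graph_def)

lemma iso_sym: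
  assumes "graph_iso G H" "\<forall>e\<in>edges G. e \<subseteq> verts G"
  shows "graph_iso H G"
proof -
  obtain f where f: "bij_betw f (verts G) (verts H)" "(\<lambda>e. f ` e) ` edges G = edges H"
    using assms(1) unfolding graph_iso_def by blast
  let ?g = "inv_into (verts G) f"
  have "bij_betw ?g (verts H) (verts G)" using f(1) by (rule bij_betw_inv_into)
  moreover have "(\<lambda>e. ?g ` e) ` edges H = edges G"
  proof -
    have "(\<lambda>e. ?g ` e) ` edges H = (\<lambda>e. ?g ` f ` e) ` edges G"
      by (subst f(2)[symmetric]) (simp add: image_image)
    also have "\<dots> = edges G"
    proof (rule image_cong[THEN trans, OF refl])
      fix e assume "e \<in> edges G"
      then have "e \<subseteq> verts G" using assms(2) by auto
      then show "?g ` f ` e = id e" using f(1)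
        by (simp add: bij_betw_def image_inv_into_cancel inv_into_image_cancel)
    qed simp
    finally show ?thesis .
  qed
  ultimately show ?thesis unfolding graph_iso_def by blast
qed

locale oddprime = fixes p :: nat assumes pr: "prime p" and od: "odd p"
begin

lemma p3: "p \<ge> 3"
proof -
  have "p \<ge> 2" using pr by (simp add: prime_ge_2_nat)
  moreover have "p \<noteq> 2" using od by auto
  ultimately show ?thesis by auto
qed

lemma prI: "prime (int p)" using pr by simp

definition enc :: "int \<Rightarrow> int \<Rightarrow> nat" where
  "enc a b = nat ((a mod int p) * int p + b mod int p)"

lemma enc_eq: "enc a b = enc a' b' \<longleftrightarrow> int p dvd (a - a') \<and> int p dvd (b - b')"
proof -
  have P: "int p > 0" using p3 by simp
  have key: "(a mod int p) * int p + b mod int p = (a' mod int p) * int p + b' mod int p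
      \<longleftrightarrow> a mod int p = a' mod int p \<and> b mod int p = b' mod int p"
  proof
    assume h: "(a mod int p) * int p + b mod int p = (a' mod int p) * int p + b' mod int p"
    have "((a mod int p) * int p + b mod int p) div int p = a mod int p"
      using P by simp
    moreover have "((a' mod int p) * int p + b' mod int p) div int p = a' mod int p"
      using P by simp
    ultimately have 1: "a mod int p = a' mod int p" using h by simp
    then show "a mod int p = a' mod int p \<and> b mod int p = b' mod int p" using h by simp
  qed simp
  have nn: "0 \<le> (x mod int p) * int p + y mod int p" for x y using P by simp
  show ?thesis unfolding enc_def
    by (simp only: eq_nat_nat_iff[OF nn nn] key mod_eq_dvd_iff)
qed

lemma enc_lt: "enc a b < p^2"
proof -
  have P: "int p > 0" using p3 by simp
  have 1: "a mod int p \<le> int p - 1" using P by (meson pos_mod_bound zle_diff1_eq)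
  have 2: "b mod int p < int p" using P by simp
  have "(a mod int p) * int p \<le> (int p - 1) * int p" using 1 P by (simp add: mult_right_mono)
  then have "(a mod int p) * int p + b mod int p < int p * int p" using 2 by (simp add: algebra_simps)
  then show ?thesis unfolding enc_def using P
    by (simp add: power2_eq_square nat_less_iff)
qed

lemma enc_surj: "x < p^2 \<Longrightarrow> x = enc (int x div int p) (int x mod int p)"
proof -
  assume x: "x < p^2"
  have P: "int p > 0" using p3 by simp
  have "x div p < p" using x p3 by (simp add: div_less_iff_less_mult power2_eq_square)
  then have "int x div int p < int p" by (simp flip: zdiv_int)
  moreover have "int x div int p \<ge> 0" by (simp flip: zdiv_int)
  ultimately have "(int x div int p) mod int p = int x div int p" by simp
  then show ?thesis unfolding enc_def
    by (metis mod_mod_trivial div_mult_mod_eq nat_int)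
qed

end

context oddprime begin

abbreviation "G \<equiv> cart_prod (cycle_graph p) (cycle_graph p)"

definition phi :: "int \<Rightarrow> int \<Rightarrow> int \<Rightarrow> int \<Rightarrow> nat \<times> nat \<Rightarrow> nat" where
  "phi u1 u2 v1 v2 = (\<lambda>(a,b). enc (int a * u1 + int b * v1) (int a * u2 + int b * v2))"

definition Hc :: "int \<Rightarrow> int \<Rightarrow> int \<Rightarrow> int \<Rightarrow> nat graph" where
  "Hc u1 u2 v1 v2 = ({..<p^2}, (\<lambda>e. phi u1 u2 v1 v2 ` e) ` edges G)"

lemma small_eq: "a < p \<Longrightarrow> b < p \<Longrightarrow> int p dvd (int a - int b) \<Longrightarrow> a = b"
proof (rule ccontr)
  assume "a < p" "b < p" "int p dvd (int a - int b)" "a \<noteq> b"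
  then have "\<bar>int p\<bar> \<le> \<bar>int a - int b\<bar>" by (intro dvd_imp_le_int) auto
  with \<open>a < p\<close> \<open>b < p\<close> show False by auto
qed

lemma pdvd_mult: "int p dvd x * y \<longleftrightarrow> int p dvd x \<or> int p dvd y"
  using prI by (rule prime_dvd_mult_iff)

lemma phi_inj:
  assumes nd: "\<not> int p dvd (u1*v2 - u2*v1)"
  shows "inj_on (phi u1 u2 v1 v2) ({..<p} \<times> {..<p})"
proof (rule inj_onI)
  fix z z' assume z: "z \<in> {..<p} \<times> {..<p}" "z' \<in> {..<p} \<times> {..<p}"
    and eqz: "phi u1 u2 v1 v2 z = phi u1 u2 v1 v2 z'"
  obtain a b where zz: "z = (a,b)" by (cases z)
  obtain a' b' where zz': "z' = (a',b')" by (cases z')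
  have ab: "(a, b) \<in> {..<p} \<times> {..<p}" "(a', b') \<in> {..<p} \<times> {..<p}" using z zz zz' by auto
  have eq: "phi u1 u2 v1 v2 (a, b) = phi u1 u2 v1 v2 (a', b')" using eqz zz zz' by simp
  define x where "x = int a - int a'"
  define y where "y = int b - int b'"
  from eq have E: "int p dvd (int a * u1 + int b * v1 - (int a' * u1 + int b' * v1))
     \<and> int p dvd (int a * u2 + int b * v2 - (int a' * u2 + int b' * v2))"
    unfolding phi_def prod.case enc_eq .
  have "int a * u1 + int b * v1 - (int a' * u1 + int b' * v1) = x*u1 + y*v1"
       "int a * u2 + int b * v2 - (int a' * u2 + int b' * v2) = x*u2 + y*v2"
    by (simp_all add: x_def y_def algebra_simps)
  with E have d: "int p dvd (x*u1 + y*v1)" "int p dvd (x*u2 + y*v2)" by simp_all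
  have "int p dvd (v2*(x*u1 + y*v1) - v1*(x*u2 + y*v2))" using d by simp
  moreover have "v2*(x*u1 + y*v1) - v1*(x*u2 + y*v2) = x * (u1*v2 - u2*v1)" by algebra
  ultimately have "int p dvd x" using nd pdvd_mult by metis
  then have "a = a'" using ab small_eq x_def by auto
  have "int p dvd (u1*(x*u2 + y*v2) - u2*(x*u1 + y*v1))" using d by simp
  moreover have "u1*(x*u2 + y*v2) - u2*(x*u1 + y*v1) = y * (u1*v2 - u2*v1)" by algebra
  ultimately have "int p dvd y" using nd pdvd_mult by metis
  then have "b = b'" using ab small_eq y_def by auto
  show "z = z'" using \<open>a = a'\<close> \<open>b = b'\<close> zz zz' by simp
qed

lemma phi_bij:
  assumes nd: "\<not> int p dvd (u1*v2 - u2*v1)"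
  shows "bij_betw (phi u1 u2 v1 v2) ({..<p} \<times> {..<p}) {..<p^2}"
proof -
  have inj: "inj_on (phi u1 u2 v1 v2) ({..<p} \<times> {..<p})" using phi_inj[OF nd] .
  have sub: "phi u1 u2 v1 v2 ` ({..<p} \<times> {..<p}) \<subseteq> {..<p^2}"
    by (auto simp: phi_def enc_lt)
  have "card (phi u1 u2 v1 v2 ` ({..<p} \<times> {..<p})) = card {..<p^2}"
    using card_image[OF inj] by (simp add: card_cartesian_product power2_eq_square)
  then have "phi u1 u2 v1 v2 ` ({..<p} \<times> {..<p}) = {..<p^2}"
    using card_subset_eq[OF _ sub] by simp
  then show ?thesis using inj by (simp add: bij_betw_def)
qed

lemma edgesG_sub: "\<forall>e\<in>edges G. e \<subseteq> verts G"
  using p3 by (auto simp: edgesG vertsG)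

lemma Hc_iso:
  assumes nd: "\<not> int p dvd (u1*v2 - u2*v1)"
  shows "graph_iso (Hc u1 u2 v1 v2) G"
proof (rule iso_sym[OF _ edgesG_sub])
  show "graph_iso G (Hc u1 u2 v1 v2)"
    unfolding graph_iso_def Hc_def verts_def[of "(_,_)"] edges_def[of "(_, _)"] fst_conv snd_conv
    apply (rule exI[of _ "phi u1 u2 v1 v2"])
    using phi_bij[OF nd] by (simp add: vertsG)
qed

lemma mod_succ_dvd: "int p dvd (int (Suc a mod p) - (int a + 1))"
proof -
  have "int (Suc a mod p) = (int a + 1) mod int p" by (simp add: zmod_int add.commute)
  then show ?thesis using mod_eq_dvd_iff[of "(int a + 1) mod int p" "int p" "int a + 1"] by simp
qed

lemma phi_succ1: "phi u1 u2 v1 v2 (Suc a mod p, b) = enc (int a * u1 + int b * v1 + u1) (int a * u2 + int b * v2 + u2)"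
proof -
  have d: "int p dvd (int (Suc a mod p) - (int a + 1))" by (rule mod_succ_dvd)
  have "int p dvd (int (Suc a mod p) - (int a + 1)) * u1" "int p dvd (int (Suc a mod p) - (int a + 1)) * u2"
    using d by simp_all
  moreover have "(int (Suc a mod p) - (int a + 1)) * u1 = int (Suc a mod p) * u1 + int b * v1 - (int a * u1 + int b * v1 + u1)"
    "(int (Suc a mod p) - (int a + 1)) * u2 = int (Suc a mod p) * u2 + int b * v2 - (int a * u2 + int b * v2 + u2)"
    by algebra+
  ultimately show ?thesis unfolding phi_def prod.case enc_eq by simp
qed

lemma phi_succ2: "phi u1 u2 v1 v2 (a, Suc b mod p) = enc (int a * u1 + int b * v1 + v1) (int a * u2 + int b * v2 + v2)"
proof -
  have d: "int p dvd (int (Suc b mod p) - (int b + 1))" by (rule mod_succ_dvd)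
  have "int p dvd (int (Suc b mod p) - (int b + 1)) * v1" "int p dvd (int (Suc b mod p) - (int b + 1)) * v2"
    using d by simp_all
  moreover have "(int (Suc b mod p) - (int b + 1)) * v1 = int a * u1 + int (Suc b mod p) * v1 - (int a * u1 + int b * v1 + v1)"
    "(int (Suc b mod p) - (int b + 1)) * v2 = int a * u2 + int (Suc b mod p) * v2 - (int a * u2 + int b * v2 + v2)"
    by algebra+
  ultimately show ?thesis unfolding phi_def prod.case enc_eq by simp
qed

lemma Hc_fwd:
  assumes "e \<in> edges (Hc u1 u2 v1 v2)"
  shows "\<exists>w1 w2. e = {enc w1 w2, enc (w1+u1) (w2+u2)} \<or> e = {enc w1 w2, enc (w1+v1) (w2+v2)}"
proof -
  from assms obtain x where x: "x \<in> edges G" "e = phi u1 u2 v1 v2 ` x"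
    unfolding Hc_def edges_def[of "(_,_)"] snd_conv by auto
  from x(1) obtain a b where "x = {(a,b),(Suc a mod p, b)} \<or> x = {(a,b),(a, Suc b mod p)}"
    unfolding edgesG by auto
  with x(2) have "e = phi u1 u2 v1 v2 ` {(a,b),(Suc a mod p, b)} \<or> e = phi u1 u2 v1 v2 ` {(a,b),(a, Suc b mod p)}"
    by auto
  then show ?thesis
    by (auto simp: phi_succ1 phi_succ2 simp del: insert_image) (auto simp: phi_def)
qed

lemma Hc_bwd:
  assumes nd: "\<not> int p dvd (u1*v2 - u2*v1)"
  shows "{enc w1 w2, enc (w1+u1) (w2+u2)} \<in> edges (Hc u1 u2 v1 v2)"
    and "{enc w1 w2, enc (w1+v1) (w2+v2)} \<in> edges (Hc u1 u2 v1 v2)"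
proof -
  have "enc w1 w2 \<in> phi u1 u2 v1 v2 ` ({..<p} \<times> {..<p})"
    using phi_bij[OF nd] enc_lt by (simp add: bij_betw_def)
  then obtain a b where ab: "a < p" "b < p" "phi u1 u2 v1 v2 (a,b) = enc w1 w2" by auto
  then have d: "int p dvd (int a * u1 + int b * v1 - w1)" "int p dvd (int a * u2 + int b * v2 - w2)"
    unfolding phi_def prod.case enc_eq by auto
  have e1: "{(a,b),(Suc a mod p, b)} \<in> edges G" and e2: "{(a,b),(a, Suc b mod p)} \<in> edges G"
    unfolding edgesG using ab by blast+
  have "phi u1 u2 v1 v2 (Suc a mod p, b) = enc (w1+u1) (w2+u2)"
    unfolding phi_succ1 enc_eq using d by (simp add: algebra_simps)
  then have "phi u1 u2 v1 v2 ` {(a,b),(Suc a mod p, b)} = {enc w1 w2, enc (w1+u1) (w2+u2)}"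
    using ab by simp
  then show "{enc w1 w2, enc (w1+u1) (w2+u2)} \<in> edges (Hc u1 u2 v1 v2)"
    using e1 unfolding Hc_def edges_def[of "(_,_)"] snd_conv by (metis image_eqI)
  have "phi u1 u2 v1 v2 (a, Suc b mod p) = enc (w1+v1) (w2+v2)"
    unfolding phi_succ2 enc_eq using d by (simp add: algebra_simps)
  then have "phi u1 u2 v1 v2 ` {(a,b),(a, Suc b mod p)} = {enc w1 w2, enc (w1+v1) (w2+v2)}"
    using ab by simp
  then show "{enc w1 w2, enc (w1+v1) (w2+v2)} \<in> edges (Hc u1 u2 v1 v2)"
    using e2 unfolding Hc_def edges_def[of "(_,_)"] snd_conv by (metis image_eqI)
qed

lemma Hc_sub:
  assumes nd: "\<not> int p dvd (u1*v2 - u2*v1)"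
  shows "edges (Hc u1 u2 v1 v2) \<subseteq> edges (complete_graph (p^2))"
proof
  fix e assume e: "e \<in> edges (Hc u1 u2 v1 v2)"
  have nu: "\<not> (int p dvd u1 \<and> int p dvd u2)" using nd by auto
  have nv: "\<not> (int p dvd v1 \<and> int p dvd v2)" using nd by auto
  have ne: "enc w1 w2 \<noteq> enc (w1+x1) (w2+x2)" if "\<not> (int p dvd x1 \<and> int p dvd x2)" for w1 w2 x1 x2
    using that unfolding enc_eq by simp
  from Hc_fwd[OF e] obtain w1 w2 where
    "e = {enc w1 w2, enc (w1+u1) (w2+u2)} \<or> e = {enc w1 w2, enc (w1+v1) (w2+v2)}" by blast
  then show "e \<in> edges (complete_graph (p^2))"
    unfolding complete_graph_def edges_def[of "(_,_)"] snd_conv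
    using ne[OF nu, of w1 w2] ne[OF nv, of w1 w2] enc_lt by blast
qed

end

context oddprime begin

definition valid :: "int \<Rightarrow> int \<Rightarrow> bool" where
  "valid k t \<longleftrightarrow> 1 \<le> k \<and> 2*k < int p \<and> 0 \<le> t \<and> 2*t < int p"

definition dirs :: "int \<Rightarrow> int \<Rightarrow> (int \<times> int) set" where
  "dirs k t = {(k, k*t), (if t = 0 then (0, k) else (k, -(k*t)))}"

lemma small_ndvd: "0 < z \<Longrightarrow> z < int p \<Longrightarrow> \<not> int p dvd z"
  using zdvd_imp_le by fastforce

lemma L:
  assumes "0 \<le> a" "2*a < int p" "0 \<le> b" "2*b < int p" "\<epsilon> \<in> {1,-1}" "int p dvd (a - \<epsilon>*b)"
  shows "a = b \<and> (\<epsilon> = -1 \<longrightarrow> a = 0)"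
proof (cases "\<epsilon> = 1")
  case True
  then have "int p dvd (a - b)" using assms by simp
  moreover have "\<bar>a - b\<bar> < int p" using assms(1-4) by (simp add: abs_less_iff)
  ultimately have "a - b = 0"
  proof (rule_tac ccontr)
    assume A: "int p dvd (a - b)" "\<bar>a - b\<bar> < int p" "a - b \<noteq> 0"
    then have "\<bar>int p\<bar> \<le> \<bar>a - b\<bar>" using dvd_imp_le_int by blast
    then show False using A(2) by simp
  qed
  then show ?thesis using True by simp
next
  case False
  then have "\<epsilon> = -1" using assms by auto
  then have "int p dvd (a + b)" using assms by simp
  moreover have "\<bar>a + b\<bar> < int p" using assms(1-4) by (simp add: abs_less_iff)
  ultimately have "a + b = 0"
  proof (rule_tac ccontr)
    assume A: "int p dvd (a + b)" "\<bar>a + b\<bar> < int p" "a + b \<noteq> 0"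
    then have "\<bar>int p\<bar> \<le> \<bar>a + b\<bar>" using dvd_imp_le_int by blast
    then show False using A(2) by simp
  qed
  then show ?thesis using assms by simp
qed

lemma Dform:
  assumes "(d1,d2) \<in> dirs k t"
  shows "(\<exists>\<sigma>\<in>{1,-1}. d1 = k \<and> d2 = k*(\<sigma>*t)) \<or> (t = 0 \<and> d1 = 0 \<and> d2 = k)"
proof -
  have "(d1 = k \<and> d2 = k*t) \<or> (t = 0 \<and> d1 = 0 \<and> d2 = k) \<or> (d1 = k \<and> d2 = -(k*t))"
    using assms unfolding dirs_def by (cases "t = 0") auto
  then show ?thesis
  proof (elim disjE)
    assume "d1 = k \<and> d2 = k*t" then show ?thesis by (intro disjI1 bexI[of _ 1]) auto
  next
    assume "d1 = k \<and> d2 = -(k*t)" then show ?thesis by (intro disjI1 bexI[of _ "-1"]) auto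
  qed simp
qed

lemma Dir:
  assumes v: "valid k t" "valid k' t'" and d: "(d1,d2) \<in> dirs k t" "(d1',d2') \<in> dirs k' t'"
    and e: "\<epsilon> \<in> {1,-1}" "int p dvd (d1 - \<epsilon>*d1')" "int p dvd (d2 - \<epsilon>*d2')"
  shows "k = k' \<and> t = t'"
  using Dform[OF d(1)] Dform[OF d(2)]
proof (elim disjE conjE bexE)
  fix \<sigma> \<sigma>' assume s: "\<sigma> \<in> {1,-1}" "\<sigma>' \<in> {1,-1}" and
    h: "d1 = k" "d2 = k * (\<sigma> * t)" "d1' = k'" "d2' = k' * (\<sigma>' * t')"
  have "k = k' \<and> (\<epsilon> = -1 \<longrightarrow> k = 0)" using L[of k k' \<epsilon>] v e h unfolding valid_def by auto
  then have kk: "k = k'" "\<epsilon> = 1" using v e(1) unfolding valid_def by auto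
  then have "int p dvd k * (\<sigma>*t - \<sigma>'*t')" using e h by (simp add: algebra_simps)
  then have "int p dvd (\<sigma>*t - \<sigma>'*t')" using pdvd_mult small_ndvd v unfolding valid_def by force
  then have "int p dvd \<sigma> * (\<sigma>*t - \<sigma>'*t')" by simp
  moreover have "\<sigma> * (\<sigma>*t - \<sigma>'*t') = t - (\<sigma>*\<sigma>')*t'" using s by auto
  moreover have "\<sigma>*\<sigma>' \<in> {1,-1}" using s by auto
  ultimately have "t = t'" using L[of t t' "\<sigma>*\<sigma>'"] v unfolding valid_def by auto
  then show ?thesis using kk by simp
next
  fix \<sigma> assume "d1 = k" "d1' = 0"
  then have "int p dvd k" using e by simp
  then show ?thesis using small_ndvd v unfolding valid_def by force
next
  fix \<sigma> assume "d1 = 0" "d1' = k'"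
  then have "int p dvd \<epsilon> * k'" using e by (simp add: dvd_diff_commute)
  then have "int p dvd k'" using e(1) by auto
  then show ?thesis using small_ndvd v unfolding valid_def by force
next
  assume h: "t = 0" "d1 = 0" "d2 = k" "t' = 0" "d1' = 0" "d2' = k'"
  then show ?thesis using L[of k k' \<epsilon>] v e unfolding valid_def by auto
qed

lemma S0: "\<exists>t \<sigma>. 0 \<le> t \<and> 2*t < int p \<and> \<sigma> \<in> {1,-1} \<and> int p dvd (z - \<sigma>*t)"
proof -
  define r where "r = z mod int p"
  have P: "int p > 0" using p3 by simp
  have r: "0 \<le> r" "r < int p" using P by (simp_all add: r_def)
  have dz: "int p dvd (z - r)" unfolding r_def by (simp add: mod_eq_dvd_iff[symmetric])
  show ?thesis
  proof (cases "2*r < int p")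
    case True
    then have "0 \<le> r \<and> 2*r < int p \<and> (1::int) \<in> {1,-1} \<and> int p dvd (z - 1*r)" using r dz by simp
    then show ?thesis by blast
  next
    case False
    have "odd (int p)" using od by simp
    have "2*r \<noteq> int p"
    proof
      assume "2*r = int p"
      then have "even (int p)" by (metis dvd_triv_left)
      with \<open>odd (int p)\<close> show False by simp
    qed
    then have "int p < 2*r" using False by simp
    moreover have "z - (-1)*(int p - r) = (z - r) + int p" by simp
    then have "int p dvd (z - (-1)*(int p - r))" using dz by (metis dvd_add dvd_refl)
    ultimately have "0 \<le> int p - r \<and> 2*(int p - r) < int p \<and> (-1::int) \<in> {1,-1} \<and> int p dvd (z - (-1)*(int p - r))"
      using r by simp
    then show ?thesis by blast
  qed
qed

lemma S:
  assumes "\<not> int p dvd z"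
  shows "\<exists>k \<epsilon>. 1 \<le> k \<and> 2*k < int p \<and> \<epsilon> \<in> {1,-1} \<and> int p dvd (z - \<epsilon>*k)"
proof -
  obtain t \<sigma> where h: "0 \<le> t" "2*t < int p" "\<sigma> \<in> {1,-1}" "int p dvd (z - \<sigma>*t)"
    using S0 by blast
  have "t \<noteq> 0" using h assms by auto
  then have "1 \<le> t \<and> 2*t < int p \<and> \<sigma> \<in> {1,-1} \<and> int p dvd (z - \<sigma>*t)" using h by simp
  then show ?thesis by blast
qed

lemma inv_ex:
  assumes "\<not> int p dvd k"
  shows "\<exists>j. int p dvd (k*j - 1)"
proof -
  have "coprime (int p) k" using prime_imp_coprime[OF prI assms] .
  then have "coprime k (int p)" by (simp add: coprime_commute)
  then obtain j where "[k * j = 1] (mod int p)" using cong_solve_coprime_int by blast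
  then show ?thesis by (auto simp: cong_iff_dvd_diff)
qed

lemma Ex_dir:
  assumes "\<not> (int p dvd d1 \<and> int p dvd d2)"
  shows "\<exists>k t e1 e2 \<epsilon>. valid k t \<and> (e1,e2) \<in> dirs k t \<and> \<epsilon> \<in> {1,-1} \<and>
            int p dvd (d1 - \<epsilon>*e1) \<and> int p dvd (d2 - \<epsilon>*e2)"
proof (cases "int p dvd d1")
  case True
  then have "\<not> int p dvd d2" using assms by simp
  then obtain k \<epsilon> where h: "1 \<le> k" "2*k < int p" "\<epsilon> \<in> {1,-1}" "int p dvd (d2 - \<epsilon>*k)"
    using S by blast
  have "valid k 0" using h by (simp add: valid_def)
  moreover have "(0, k) \<in> dirs k 0" by (simp add: dirs_def)
  moreover have "int p dvd (d1 - \<epsilon>*0)" using True by simp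
  ultimately have F: "valid k 0" "(0, k) \<in> dirs k 0" "int p dvd (d1 - \<epsilon>*0)" by blast+
  have "valid k 0 \<and> (0, k) \<in> dirs k 0 \<and> \<epsilon> \<in> {1,-1} \<and> int p dvd (d1 - \<epsilon>*0) \<and> int p dvd (d2 - \<epsilon>*k)"
    using h F by blast
  then show ?thesis by blast
next
  case False
  then obtain k \<epsilon> where h: "1 \<le> k" "2*k < int p" "\<epsilon> \<in> {1,-1}" "int p dvd (d1 - \<epsilon>*k)"
    using S by blast
  have "\<not> int p dvd k" using h small_ndvd by simp
  then obtain j where j: "int p dvd (k*j - 1)" using inv_ex by blast
  define s where "s = \<epsilon>*j*d2"
  obtain t \<sigma> where g: "0 \<le> t" "2*t < int p" "\<sigma> \<in> {1,-1}" "int p dvd (s - \<sigma>*t)"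
    using S0 by blast
  have vk: "valid k t" using h g by (simp add: valid_def)
  have dk: "(k, k*(\<sigma>*t)) \<in> dirs k t" using g(3) by (auto simp: dirs_def)
  have ee: "\<epsilon>*\<epsilon> = 1" using h(3) by auto
  have "d2 - \<epsilon>*(k*(\<sigma>*t)) = -(d2*(k*j - 1)) + d2*k*j*(1 - \<epsilon>*\<epsilon>) + \<epsilon>*k*(s - \<sigma>*t)"
    unfolding s_def by (simp add: algebra_simps)
  also have "\<dots> = -(d2*(k*j - 1)) + \<epsilon>*k*(s - \<sigma>*t)" using ee by simp
  finally have "int p dvd (d2 - \<epsilon>*(k*(\<sigma>*t)))" using j g(4) by simp
  note F = this
  have "valid k t \<and> (k, k*(\<sigma>*t)) \<in> dirs k t \<and> \<epsilon> \<in> {1,-1} \<and> int p dvd (d1 - \<epsilon>*k) \<and> int p dvd (d2 - \<epsilon>*(k*(\<sigma>*t)))"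
    using vk dk h F by blast
  then show ?thesis by blast
qed

end

context oddprime begin

definition vv1 :: "int \<Rightarrow> int \<Rightarrow> int" where "vv1 k t = (if t = 0 then 0 else k)"
definition vv2 :: "int \<Rightarrow> int \<Rightarrow> int" where "vv2 k t = (if t = 0 then k else -(k*t))"
definition Hkt :: "int \<Rightarrow> int \<Rightarrow> nat graph" where "Hkt k t = Hc k (k*t) (vv1 k t) (vv2 k t)"

lemma dirs_eq: "dirs k t = {(k, k*t), (vv1 k t, vv2 k t)}"
  by (simp add: dirs_def vv1_def vv2_def)

lemma nd_kt:
  assumes "valid k t"
  shows "\<not> int p dvd (k * vv2 k t - (k*t) * vv1 k t)"
proof (cases "t = 0")
  case True
  have "\<not> int p dvd k" using assms small_ndvd unfolding valid_def by simp
  then show ?thesis using True pdvd_mult by (simp add: vv1_def vv2_def)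
next
  case False
  have k: "\<not> int p dvd k" using assms small_ndvd unfolding valid_def by simp
  have t: "\<not> int p dvd t" using assms small_ndvd False unfolding valid_def by simp
  have two: "\<not> int p dvd 2" using small_ndvd p3 by simp
  have "k * vv2 k t - (k*t) * vv1 k t = - (2 * (k * (k * t)))" using False by (simp add: vv1_def vv2_def algebra_simps)
  moreover have "\<not> int p dvd (2 * (k * (k * t)))" using k t two pdvd_mult by metis
  ultimately show ?thesis by simp
qed

lemma bwd_kt:
  assumes "valid k t" "(e1, e2) \<in> dirs k t"
  shows "{enc w1 w2, enc (w1+e1) (w2+e2)} \<in> edges (Hkt k t)"
  using assms(2) Hc_bwd[OF nd_kt[OF assms(1)], of w1 w2] unfolding dirs_eq Hkt_def by auto

lemma fwd_kt:
  assumes "e \<in> edges (Hkt k t)"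
  shows "\<exists>w1 w2 e1 e2. (e1, e2) \<in> dirs k t \<and> e = {enc w1 w2, enc (w1+e1) (w2+e2)}"
  using Hc_fwd[OF assms[unfolded Hkt_def]] unfolding dirs_eq by blast

lemma disj_kt:
  assumes v: "valid k t" "valid k' t'" and e: "e \<in> edges (Hkt k t)" "e \<in> edges (Hkt k' t')"
  shows "k = k' \<and> t = t'"
proof -
  obtain w1 w2 e1 e2 where A: "(e1, e2) \<in> dirs k t" "e = {enc w1 w2, enc (w1+e1) (w2+e2)}"
    using fwd_kt[OF e(1)] by blast
  obtain w1' w2' e1' e2' where B: "(e1', e2') \<in> dirs k' t'" "e = {enc w1' w2', enc (w1'+e1') (w2'+e2')}"
    using fwd_kt[OF e(2)] by blast
  have "(enc w1 w2 = enc w1' w2' \<and> enc (w1+e1) (w2+e2) = enc (w1'+e1') (w2'+e2')) \<or>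
        (enc w1 w2 = enc (w1'+e1') (w2'+e2') \<and> enc (w1+e1) (w2+e2) = enc w1' w2')"
    using A(2) B(2) doubleton_eq_iff[of "enc w1 w2" "enc (w1+e1) (w2+e2)" "enc w1' w2'" "enc (w1'+e1') (w2'+e2')"] by argo
  then show ?thesis
  proof (elim disjE conjE)
    assume h1: "enc w1 w2 = enc w1' w2'" and h2: "enc (w1+e1) (w2+e2) = enc (w1'+e1') (w2'+e2')"
    from h1 h2 have d: "int p dvd (w1 - w1')" "int p dvd (w2 - w2')"
      "int p dvd (w1+e1 - (w1'+e1'))" "int p dvd (w2+e2 - (w2'+e2'))" unfolding enc_eq by auto
    have "e1 - 1*e1' = (w1+e1 - (w1'+e1')) - (w1 - w1')" "e2 - 1*e2' = (w2+e2 - (w2'+e2')) - (w2 - w2')"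
      by simp_all
    then have "int p dvd (e1 - 1*e1')" "int p dvd (e2 - 1*e2')" using d by (metis dvd_diff)+
    then show ?thesis using Dir[OF v A(1) B(1), of 1] by simp
  next
    assume h1: "enc w1 w2 = enc (w1'+e1') (w2'+e2')" and h2: "enc (w1+e1) (w2+e2) = enc w1' w2'"
    from h1 h2 have d: "int p dvd (w1 - (w1'+e1'))" "int p dvd (w2 - (w2'+e2'))"
      "int p dvd (w1+e1 - w1')" "int p dvd (w2+e2 - w2')" unfolding enc_eq by auto
    have "e1 - (-1)*e1' = (w1+e1 - w1') - (w1 - (w1'+e1'))" "e2 - (-1)*e2' = (w2+e2 - w2') - (w2 - (w2'+e2'))"
      by simp_all
    then have "int p dvd (e1 - (-1)*e1')" "int p dvd (e2 - (-1)*e2')" using d by (metis dvd_diff)+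
    then show ?thesis using Dir[OF v A(1) B(1), of "-1"] by simp
  qed
qed

lemma cover_kt:
  assumes "x < p^2" "y < p^2" "x \<noteq> y"
  shows "\<exists>k t. valid k t \<and> {x, y} \<in> edges (Hkt k t)"
proof -
  define X1 where "X1 = int x div int p"
  define X2 where "X2 = int x mod int p"
  define Y1 where "Y1 = int y div int p"
  define Y2 where "Y2 = int y mod int p"
  have x: "x = enc X1 X2" unfolding X1_def X2_def using enc_surj assms(1) by blast
  have y: "y = enc Y1 Y2" unfolding Y1_def Y2_def using enc_surj assms(2) by blast
  have "\<not> (int p dvd (Y1 - X1) \<and> int p dvd (Y2 - X2))"
  proof
    assume "int p dvd (Y1 - X1) \<and> int p dvd (Y2 - X2)"
    then have "enc Y1 Y2 = enc X1 X2" unfolding enc_eq by simp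
    then show False using x y assms(3) by simp
  qed
  then obtain k t e1 e2 \<epsilon> where h: "valid k t" "(e1,e2) \<in> dirs k t" "\<epsilon> \<in> {1,-1}"
    "int p dvd (Y1 - X1 - \<epsilon>*e1)" "int p dvd (Y2 - X2 - \<epsilon>*e2)"
    using Ex_dir by blast
  show ?thesis
  proof (cases "\<epsilon> = 1")
    case True
    have "y = enc (X1+e1) (X2+e2)" unfolding y enc_eq using h(4,5) True by (simp add: algebra_simps)
    then have "{x,y} \<in> edges (Hkt k t)" using bwd_kt[OF h(1,2), of X1 X2] x by simp
    then show ?thesis using h(1) by blast
  next
    case False
    then have m: "\<epsilon> = -1" using h(3) by simp
    have "x = enc (Y1+e1) (Y2+e2)" unfolding x enc_eq
    proof
      have "X1 - (Y1 + e1) = -(Y1 - X1 - \<epsilon>*e1)" using m by simp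
      then show "int p dvd (X1 - (Y1 + e1))" using h(4) by (metis dvd_minus_iff)
      have "X2 - (Y2 + e2) = -(Y2 - X2 - \<epsilon>*e2)" using m by simp
      then show "int p dvd (X2 - (Y2 + e2))" using h(5) by (metis dvd_minus_iff)
    qed
    then have "{y,x} \<in> edges (Hkt k t)" using bwd_kt[OF h(1,2), of Y1 Y2] y by simp
    then show ?thesis using h(1) by (metis insert_commute)
  qed
qed

end

context oddprime begin

definition mm :: nat where "mm = (p - 1) div 2"
definition kk :: "nat \<Rightarrow> int" where "kk i = int (i div (mm+1)) + 1"
definition tt :: "nat \<Rightarrow> int" where "tt i = int (i mod (mm+1))"

lemma p_eq: "p = 2*mm + 1"
proof -
  obtain q where "p = 2*q + 1" using od by (auto elim!: oddE)
  then show ?thesis unfolding mm_def by simp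
qed

lemma idx_valid:
  assumes "i < mm*(mm+1)"
  shows "valid (kk i) (tt i)"
proof -
  have "i div (mm+1) < mm" using assms by (simp add: div_less_iff_less_mult)
  moreover have "i mod (mm+1) \<le> mm" using mod_less_divisor[of "mm+1" i] by linarith
  ultimately have d: "int (i div (mm+1)) < int mm" and m: "int (i mod (mm+1)) \<le> int mm" by simp_all
  have P: "int p = 2*int mm + 1" using p_eq by simp
  have aux: "\<And>A B M Q :: int. 0 \<le> A \<Longrightarrow> A < M \<Longrightarrow> 0 \<le> B \<Longrightarrow> B \<le> M \<Longrightarrow> Q = 2*M+1 \<Longrightarrow>
      1 \<le> A+1 \<and> 2*(A+1) < Q \<and> 0 \<le> B \<and> 2*B < Q" by arith
  show ?thesis unfolding valid_def kk_def tt_def using aux[OF _ d _ m P] by simp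
qed

lemma idx_inj:
  assumes "kk i = kk j" "tt i = tt j"
  shows "i = j"
proof -
  have "i div (mm+1) = j div (mm+1)" "i mod (mm+1) = j mod (mm+1)" using assms by (simp_all add: kk_def tt_def)
  then show ?thesis by (metis div_mult_mod_eq)
qed

lemma idx_surj:
  assumes "valid k t"
  shows "\<exists>i < mm*(mm+1). kk i = k \<and> tt i = t"
proof -
  define a where "a = nat (k - 1)"
  define b where "b = nat t"
  have a: "a < mm" and b: "b < mm + 1" using assms p_eq unfolding valid_def a_def b_def by auto
  define i where "i = b + a*(mm+1)"
  have "i div (mm+1) = a" "i mod (mm+1) = b" using b unfolding i_def by (simp_all only: div_mult_self1 mod_mult_self1 div_less mod_less)
  moreover have "i < mm*(mm+1)"
  proof -
    have "i < a*(mm+1) + (mm+1)" using b unfolding i_def by simp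
    also have "\<dots> = (a+1)*(mm+1)" by simp
    also have "\<dots> \<le> mm*(mm+1)" using a by (intro mult_right_mono) auto
    finally show ?thesis .
  qed
  ultimately show ?thesis using assms unfolding kk_def tt_def a_def b_def valid_def
    by (intro exI[of _ i]) auto
qed

lemma main: "edge_partition_into (complete_graph (p^2)) G (mm*(mm+1))"
  unfolding edge_partition_into_def
proof (intro exI[of _ "\<lambda>i. Hkt (kk i) (tt i)"] conjI allI impI)
  fix i assume i: "i < mm*(mm+1)"
  have v: "valid (kk i) (tt i)" using idx_valid[OF i] .
  show "verts (Hkt (kk i) (tt i)) \<subseteq> verts (complete_graph (p\<^sup>2))"
    by (simp add: Hkt_def Hc_def verts_def complete_graph_def)
  show "edges (Hkt (kk i) (tt i)) \<subseteq> edges (complete_graph (p\<^sup>2))"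
    unfolding Hkt_def using Hc_sub[OF nd_kt[OF v]] .
  show "graph_iso (Hkt (kk i) (tt i)) G"
    unfolding Hkt_def using Hc_iso[OF nd_kt[OF v]] .
next
  fix i j assume i: "i < mm*(mm+1)" and j: "j < mm*(mm+1)" and ne: "i \<noteq> j"
  show "edges (Hkt (kk i) (tt i)) \<inter> edges (Hkt (kk j) (tt j)) = {}"
  proof (rule ccontr)
    assume "edges (Hkt (kk i) (tt i)) \<inter> edges (Hkt (kk j) (tt j)) \<noteq> {}"
    then obtain e where "e \<in> edges (Hkt (kk i) (tt i))" "e \<in> edges (Hkt (kk j) (tt j))" by blast
    then have "kk i = kk j \<and> tt i = tt j" using disj_kt idx_valid i j by blast
    then show False using idx_inj ne by blast
  qed
next
  show "(\<Union>i<mm*(mm+1). edges (Hkt (kk i) (tt i))) = edges (complete_graph (p\<^sup>2))"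
  proof
    show "(\<Union>i<mm*(mm+1). edges (Hkt (kk i) (tt i))) \<subseteq> edges (complete_graph (p\<^sup>2))"
      using Hc_sub nd_kt idx_valid unfolding Hkt_def by blast
    show "edges (complete_graph (p\<^sup>2)) \<subseteq> (\<Union>i<mm*(mm+1). edges (Hkt (kk i) (tt i)))"
    proof
      fix e assume "e \<in> edges (complete_graph (p\<^sup>2))"
      then obtain x y where e: "e = {x,y}" "x < p^2" "y < p^2" "x \<noteq> y"
        unfolding complete_graph_def edges_def by auto
      obtain k t where kt: "valid k t" "{x, y} \<in> edges (Hkt k t)" using cover_kt[OF e(2-4)] by blast
      obtain i where "i < mm*(mm+1)" "kk i = k" "tt i = t" using idx_surj[OF kt(1)] by blast
      then show "e \<in> (\<Union>i<mm*(mm+1). edges (Hkt (kk i) (tt i)))" using kt e by blast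
    qed
  qed
qed

lemma count: "(p^2 - 1) div 4 = mm*(mm+1)"
proof -
  have "p^2 = (2*mm+1)^2" using p_eq by metis
  also have "\<dots> = 4*(mm*(mm+1)) + 1" by (simp add: power2_eq_square algebra_simps)
  finally have "p^2 - 1 = 4*(mm*(mm+1))" by simp
  then show ?thesis by simp
qed

end

theorem theorem1:
  fixes p :: nat
  assumes "prime p" and "odd p"
  shows "edge_partition_into (complete_graph (p^2))
           (cart_prod (cycle_graph p) (cycle_graph p)) ((p^2 - 1) div 4)"
proof -
  interpret oddprime p using assms by unfold_locales
  show ?thesis using main count by simp
qed

end
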